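(* (1) If $\mathcal A=(X,(A,A^\vee),\kappa)$ is a cospectral algebraic quotient vector bundle, then for every open $U\subset X$, $\gamma_{F\circ\kappa}(U)=F\bigl(\gamma^\complement_\kappa(X\setminus U)\bigr)$; that is, $\complement\colon(\Omega X,(A^\vee,A),\gamma_{F\circ\kappa})\to((\mathcal CX)^{\mathrm{op}},(A^\vee,A),F\circ\gamma^\complement_\kappa)$, $U\mapsto X\setminus U$, is an $\mathrm{id}$-isomorphism. (2) If $\mathcal A=(X,(A,A^\vee),\kappa)$ is spectral, then for every closed $C\subset X$, $\gamma^\complement_{F\circ\kappa}(C)=F\bigl(\gamma_\kappa(X\setminus C)\bigr)$; that is, $\complement\colon((\Omega X)^{\mathrm{op}},(A^\vee,A),F\circ\gamma_\kappa)\to(\mathcal CX,(A^\vee,A),\gamma^\complement_{F\circ\kappa})$ is an $\mathrm{id}$-isomorphism. (3) For any algebraic linearized colocale $\mathfrak A^\complement=(L^\complement,(A,A^\vee),\gamma^\complement)$, the algebraic quotient vector bundles $\boldsymbol\Sigma\bigl((\mathfrak A^\complement)^\vee\bigr)$ and $(\boldsymbol I\mathfrak A^\complement)^\vee$ are isomorphic. (4) For any algebraic linearized locale $\mathfrak A=(L,(A,A^\vee),\gamma)$, the algebraic quotient vector bundles $(\boldsymbol\Sigma\mathfrak A)^\vee$ and $\boldsymbol I(\mathfrak A^\vee)$ are isomorphic.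
   Context: A dual pair $(A,A^\vee)$ consists of complex vector spaces with a non-degenerate bilinear form $\langle\cdot,\cdot\rangle\colon A\times A^\vee\to\mathbb C$. For subspaces $V\subset A$, $\mathcal V\subset A^\vee$: $F(V)=\{\phi:\langle a,\phi\rangle=0\ \forall a\in V\}$, $G(\mathcal V)=\{a:\langle a,\phi\rangle=0\ \forall\phi\in\mathcal V\}$. $\mathrm{Max}\,A$ is the image of $G$, $\mathrm{Max}\,A^\vee$ the image of $F$; these are complete lattices, with join in $\mathrm{Max}\,A$ given by $\bigvee V_\alpha=G F(\mathrm{span}\bigcup V_\alpha)$ (similarly in $\mathrm{Max}\,A^\vee$). The pair $(A^\vee,A)$ is a dual pair with the transposed form. An algebraic quotient vector bundle is $(X,(A,A^\vee),\kappa)$, $X$ a space, $\kappa\colon X\to\mathrm{Max}\,A$ any map; its codual is $(X,(A^\vee,A),F\circ\kappa)$. It is spectral if $\{x:a\notin\kappa(x)\}$ is open for each $a\in A$, cospectral if $\{x:\kappa(x)\subset V\}$ is closed for each $V\in\mathrm{Max}\,A$. Restriction map: $\gamma_\kappa(U)=\mathrm{span}\{a:\mathrm{int}\{x:a\notin\kappa(x)\}\subset U\}$ for $U$ open. Corestriction map: $\gamma^\complement_\kappa(C)=\bigvee_{x\in C}\kappa(x)$ (join in $\mathrm{Max}\,A$) for $C$ closed. $\Omega X$, $\mathcal CX$: open and closed sets, $\mathrm{op}$ denotes opposite order. An $\mathrm{id}$-isomorphism $(L_1,(B,B^\vee),\gamma_1)\to(L_2,(B,B^\vee),\gamma_2)$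 is a lattice isomorphism $h\colon L_1\to L_2$ with $\gamma_1=\gamma_2\circ h$. An algebraic linearized locale is $(L,(A,A^\vee),\gamma)$, $L$ a locale, $\gamma\colon L\to\mathrm{Max}\,A$ meet-preserving; an algebraic linearized colocale is $(L^\complement,(A,A^\vee),\gamma^\complement)$, $L^\complement$ a complete lattice whose opposite is a locale, $\gamma^\complement\colon L^\complement\to\mathrm{Max}\,A$ join-preserving. Codual of a linearized locale: $\mathfrak A^\vee=(L^{\mathrm{op}},(A^\vee,A),F\circ\gamma)$; codual of a linearized colocale: $(\mathfrak A^\complement)^\vee=((L^\complement)^{\mathrm{op}},(A^\vee,A),F\circ\gamma^\complement)$. For a locale $L$, $\Sigma L$ is the set of primes ($p\ne1$, $a\wedge b\le p\Rightarrow a\le p$ or $b\le p$) with open sets $\{p:a\not\le p\}$; $\boldsymbol\Sigma(L,(A,A^\vee),\gamma)=(\Sigma L,(A,A^\vee),\gamma|_{\Sigma L})$. For a colocale, $IL^\complement$ is the set of $c\ne0$ with $c\le a\vee b\Rightarrow c\le a$ or $c\le b$, closed sets $\{c:c\le a\}$; $\boldsymbol I(L^\complement,(A,A^\vee),\gamma^\complement)=(IL^\complement,(A,A^\vee),\gamma^\complement|_{IL^\complement})$. An isomorphism between algebraic quotient vector bundles $(X,(B,B^\vee),\kappa_1)$ and $(Y,(B,B^\vee),\kappa_2)$ with the same dual pair is a homeomorphism $h\colon X\to Y$ with $\kappa_2\circ h=\kappa_1$. *)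

theory Defs
  imports "HOL-Analysis.Analysis" "HOL-Library.Dual_Ordered_Lattice"
begin

(* A dual pair (A, A^v): A is the whole type 'a with complex scalar multiplication sa,
   A^v is the whole type 'b with scalar multiplication sb, and p is a non-degenerate
   bilinear form A x A^v -> C. *)
definition dual_pair ::
  "(complex \<Rightarrow> 'a::ab_group_add \<Rightarrow> 'a) \<Rightarrow> (complex \<Rightarrow> 'b::ab_group_add \<Rightarrow> 'b)
   \<Rightarrow> ('a \<Rightarrow> 'b \<Rightarrow> complex) \<Rightarrow> bool" where
  "dual_pair sa sb p \<longleftrightarrow>
     vector_space sa \<and> vector_space sb \<and>
     (\<forall>x y f. p (x + y) f = p x f + p y f) \<and>
     (\<forall>c x f. p (sa c x) f = c * p x f) \<and>
     (\<forall>x f g. p x (f + g) = p x f + p x g) \<and>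
     (\<forall>c x f. p x (sb c f) = c * p x f) \<and>
     (\<forall>x. (\<forall>f. p x f = 0) \<longrightarrow> x = 0) \<and>
     (\<forall>f. (\<forall>x. p x f = 0) \<longrightarrow> f = 0)"

definition tr :: "('a \<Rightarrow> 'b \<Rightarrow> complex) \<Rightarrow> 'b \<Rightarrow> 'a \<Rightarrow> complex" where
  "tr p = (\<lambda>f a. p a f)"

definition F_of :: "('a \<Rightarrow> 'b \<Rightarrow> complex) \<Rightarrow> 'a set \<Rightarrow> 'b set" where
  "F_of p V = {f. \<forall>a\<in>V. p a f = 0}"

definition G_of :: "('a \<Rightarrow> 'b \<Rightarrow> complex) \<Rightarrow> 'b set \<Rightarrow> 'a set" where
  "G_of p W = {a. \<forall>f\<in>W. p a f = 0}"

definition Max_of :: "('a \<Rightarrow> 'b \<Rightarrow> complex) \<Rightarrow> 'a set set" where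
  "Max_of p = range (G_of p)"

definition join_of :: "(complex \<Rightarrow> 'a::ab_group_add \<Rightarrow> 'a) \<Rightarrow> ('a \<Rightarrow> 'b \<Rightarrow> complex)
    \<Rightarrow> 'a set set \<Rightarrow> 'a set" where
  "join_of s p Vs = G_of p (F_of p (module.span s (\<Union>Vs)))"

definition qvb :: "('a \<Rightarrow> 'b \<Rightarrow> complex) \<Rightarrow> 'x topology \<Rightarrow> ('x \<Rightarrow> 'a set) \<Rightarrow> bool" where
  "qvb p X \<kappa> \<longleftrightarrow> (\<forall>x\<in>topspace X. \<kappa> x \<in> Max_of p)"

definition spectral :: "'x topology \<Rightarrow> ('x \<Rightarrow> 'a set) \<Rightarrow> bool" where
  "spectral X \<kappa> \<longleftrightarrow> (\<forall>a. openin X {x \<in> topspace X. a \<notin> \<kappa> x})"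

definition cospectral :: "('a \<Rightarrow> 'b \<Rightarrow> complex) \<Rightarrow> 'x topology \<Rightarrow> ('x \<Rightarrow> 'a set) \<Rightarrow> bool" where
  "cospectral p X \<kappa> \<longleftrightarrow> (\<forall>V\<in>Max_of p. closedin X {x \<in> topspace X. \<kappa> x \<subseteq> V})"

definition restr :: "(complex \<Rightarrow> 'a::ab_group_add \<Rightarrow> 'a) \<Rightarrow> 'x topology \<Rightarrow> ('x \<Rightarrow> 'a set)
    \<Rightarrow> 'x set \<Rightarrow> 'a set" where
  "restr s X \<kappa> U = module.span s {a. X interior_of {x \<in> topspace X. a \<notin> \<kappa> x} \<subseteq> U}"

definition corestr :: "(complex \<Rightarrow> 'a::ab_group_add \<Rightarrow> 'a) \<Rightarrow> ('a \<Rightarrow> 'b \<Rightarrow> complex)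
    \<Rightarrow> 'x topology \<Rightarrow> ('x \<Rightarrow> 'a set) \<Rightarrow> 'x set \<Rightarrow> 'a set" where
  "corestr s p X \<kappa> C = join_of s p (\<kappa> ` C)"

(* id-isomorphism (L1,(B,B^v),\<gamma>1) \<rightarrow> (L2,(B,B^v),\<gamma>2): lattice (= order) isomorphism h
   with \<gamma>1 = \<gamma>2 \<circ> h *)
definition id_iso :: "'u set \<Rightarrow> ('u \<Rightarrow> 'u \<Rightarrow> bool) \<Rightarrow> 'v set \<Rightarrow> ('v \<Rightarrow> 'v \<Rightarrow> bool)
    \<Rightarrow> ('u \<Rightarrow> 'c) \<Rightarrow> ('v \<Rightarrow> 'c) \<Rightarrow> ('u \<Rightarrow> 'v) \<Rightarrow> bool" where
  "id_iso L1 le1 L2 le2 g1 g2 h \<longleftrightarrow>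
     bij_betw h L1 L2 \<and> (\<forall>x\<in>L1. \<forall>y\<in>L1. le1 x y \<longleftrightarrow> le2 (h x) (h y)) \<and>
     (\<forall>x\<in>L1. g1 x = g2 (h x))"

definition frame_law :: "'l::complete_lattice itself \<Rightarrow> bool" where
  "frame_law _ \<longleftrightarrow> (\<forall>(a::'l) S. inf a (Sup S) = Sup (inf a ` S))"

definition colocale_law :: "'l::complete_lattice itself \<Rightarrow> bool" where
  "colocale_law _ \<longleftrightarrow> frame_law TYPE('l dual)"

definition Sigma_pts :: "'l::complete_lattice set" where
  "Sigma_pts = {p. p \<noteq> top \<and> (\<forall>a b. inf a b \<le> p \<longrightarrow> a \<le> p \<or> b \<le> p)}"

definition Sigma_top :: "'l::complete_lattice topology" where
  "Sigma_top = topology (\<lambda>U. \<exists>a. U = {p \<in> Sigma_pts. \<not> a \<le> p})"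

definition I_pts :: "'l::complete_lattice set" where
  "I_pts = {c. c \<noteq> bot \<and> (\<forall>a b. c \<le> sup a b \<longrightarrow> c \<le> a \<or> c \<le> b)}"

definition I_top :: "'l::complete_lattice topology" where
  "I_top = topology (\<lambda>U. \<exists>a. U = I_pts - {c \<in> I_pts. c \<le> a})"

end

theory Submission
  imports Defs
begin


lemma vs_module: "vector_space s \<Longrightarrow> module s"
  by (simp add: module_def vector_space_def)

lemma FGF: "F_of p (G_of p (F_of p V)) = F_of p V"
  unfolding F_of_def G_of_def by auto

lemma GFG: "G_of p (F_of p (G_of p V)) = G_of p V"
  unfolding F_of_def G_of_def by auto

lemma F_tr: "F_of (tr p) = G_of p"
  unfolding F_of_def G_of_def tr_def by auto

lemma G_tr: "G_of (tr p) = F_of p"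
  unfolding F_of_def G_of_def tr_def by auto

lemma p_zero1:
  assumes "dual_pair sa sb p" shows "p 0 f = 0"
proof -
  have h: "\<forall>x y f. p (x + y) f = p x f + p y f" using assms unfolding dual_pair_def by (elim conjE) assumption
  have "p (0 + 0) f = p 0 f + p 0 f" using h[rule_format, of 0 0 f] .
  then show ?thesis by simp
qed

lemma p_zero2:
  assumes "dual_pair sa sb p" shows "p a 0 = 0"
proof -
  have h: "\<forall>x f g. p x (f + g) = p x f + p x g" using assms unfolding dual_pair_def by (elim conjE) assumption
  have "p a (0 + 0) = p a 0 + p a 0" using h[rule_format, of a 0 0] .
  then show ?thesis by simp
qed

lemma G_subspace:
  assumes "dual_pair sa sb p" shows "module.subspace sa (G_of p W)"
proof -
  have m: "module sa" using assms unfolding dual_pair_def by (elim conjE) (rule vs_module, assumption)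
  show ?thesis
    unfolding module.subspace_def[OF m] G_of_def
    using assms p_zero1[OF assms] unfolding dual_pair_def by auto
qed

lemma F_subspace:
  assumes "dual_pair sa sb p" shows "module.subspace sb (F_of p V)"
proof -
  have m: "module sb" using assms unfolding dual_pair_def by (elim conjE) (rule vs_module, assumption)
  show ?thesis
    unfolding module.subspace_def[OF m] F_of_def
    using assms p_zero2[OF assms] unfolding dual_pair_def by auto
qed

lemma F_span:
  assumes "dual_pair sa sb p" shows "F_of p (module.span sa S) = F_of p S"
proof -
  have m: "module sa" using assms unfolding dual_pair_def by (elim conjE) (rule vs_module, assumption)
  have "S \<subseteq> G_of p (F_of p S)" unfolding F_of_def G_of_def by auto
  then have "module.span sa S \<subseteq> G_of p (F_of p S)"
    using module.span_minimal[OF m] G_subspace[OF assms] by blast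
  then have 1: "F_of p (G_of p (F_of p S)) \<subseteq> F_of p (module.span sa S)"
    unfolding F_of_def by auto
  have "S \<subseteq> module.span sa S" using module.span_superset[OF m] by blast
  then have 2: "F_of p (module.span sa S) \<subseteq> F_of p S" unfolding F_of_def by auto
  from 2 1[unfolded FGF] show ?thesis by (rule equalityI)
qed

lemma G_span:
  assumes "dual_pair sa sb p" shows "G_of p (module.span sb S) = G_of p S"
proof -
  have m: "module sb" using assms unfolding dual_pair_def by (elim conjE) (rule vs_module, assumption)
  have "S \<subseteq> F_of p (G_of p S)" unfolding F_of_def G_of_def by auto
  then have "module.span sb S \<subseteq> F_of p (G_of p S)"
    using module.span_minimal[OF m] F_subspace[OF assms] by blast
  then have 1: "G_of p (F_of p (G_of p S)) \<subseteq> G_of p (module.span sb S)"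
    unfolding G_of_def by auto
  have "S \<subseteq> module.span sb S" using module.span_superset[OF m] by blast
  then have 2: "G_of p (module.span sb S) \<subseteq> G_of p S" unfolding G_of_def by auto
  from 2 1[unfolded GFG] show ?thesis by (rule equalityI)
qed

lemma span_F:
  assumes "dual_pair sa sb p" shows "module.span sb (F_of p V) = F_of p V"
proof -
  have m: "module sb" using assms unfolding dual_pair_def by (elim conjE) (rule vs_module, assumption)
  show ?thesis using module.span_eq_iff[OF m] F_subspace[OF assms] by blast
qed

lemma Sigma_istop: "istopology (\<lambda>U. \<exists>a::'l::complete_lattice. U = {p \<in> Sigma_pts. \<not> a \<le> p})"
  unfolding istopology_def
proof (intro conjI allI impI)
  fix S T :: "'l set"
  assume "\<exists>a. S = {p \<in> Sigma_pts. \<not> a \<le> p}" "\<exists>a. T = {p \<in> Sigma_pts. \<not> a \<le> p}"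
  then obtain a b where ab: "S = {p \<in> Sigma_pts. \<not> a \<le> p}" "T = {p \<in> Sigma_pts. \<not> b \<le> p}" by blast
  have "S \<inter> T = {p \<in> Sigma_pts. \<not> inf a b \<le> p}"
    unfolding ab Sigma_pts_def using le_infI1 le_infI2 by blast
  then show "\<exists>c. S \<inter> T = {p \<in> Sigma_pts. \<not> c \<le> p}" by blast
next
  fix K :: "'l set set"
  assume K: "\<forall>S\<in>K. \<exists>a. S = {p \<in> Sigma_pts. \<not> a \<le> p}"
  define A where "A = {a. {p \<in> Sigma_pts. \<not> a \<le> p} \<in> K}"
  have "\<Union>K = {p \<in> Sigma_pts. \<not> Sup A \<le> p}"
  proof
    show "\<Union>K \<subseteq> {p \<in> Sigma_pts. \<not> Sup A \<le> p}"
    proof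
      fix x assume "x \<in> \<Union>K"
      then obtain S where "S \<in> K" "x \<in> S" by blast
      with K obtain a where "S = {p \<in> Sigma_pts. \<not> a \<le> p}" by blast
      with \<open>S \<in> K\<close> \<open>x \<in> S\<close> show "x \<in> {p \<in> Sigma_pts. \<not> Sup A \<le> p}"
        unfolding A_def by (auto simp: Sup_le_iff)
    qed
    show "{p \<in> Sigma_pts. \<not> Sup A \<le> p} \<subseteq> \<Union>K"
      unfolding A_def by (auto simp: Sup_le_iff)
  qed
  then show "\<exists>c. \<Union>K = {p \<in> Sigma_pts. \<not> c \<le> p}" by blast
qed

lemma Sigma_open: "openin (Sigma_top::'l::complete_lattice topology) U \<longleftrightarrow> (\<exists>a. U = {p \<in> Sigma_pts. \<not> a \<le> p})"
  unfolding Sigma_top_def topology_inverse'[OF Sigma_istop] by (rule refl)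

lemma Sigma_space: "topspace (Sigma_top::'l::complete_lattice topology) = Sigma_pts"
proof -
  have "Sigma_pts = {p \<in> (Sigma_pts::'l set). \<not> top \<le> p}"
    unfolding Sigma_pts_def by (auto simp: top_le)
  then have "openin (Sigma_top::'l topology) Sigma_pts" using Sigma_open by blast
  moreover have "\<And>U. openin (Sigma_top::'l topology) U \<Longrightarrow> U \<subseteq> Sigma_pts"
    using Sigma_open by blast
  ultimately show ?thesis unfolding topspace_def by blast
qed

lemma I_istop: "istopology (\<lambda>U. \<exists>a::'l::complete_lattice. U = I_pts - {c \<in> I_pts. c \<le> a})"
  unfolding istopology_def
proof (intro conjI allI impI)
  fix S T :: "'l set"
  assume "\<exists>a. S = I_pts - {c \<in> I_pts. c \<le> a}" "\<exists>a. T = I_pts - {c \<in> I_pts. c \<le> a}"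
  then obtain a b where ab: "S = I_pts - {c \<in> I_pts. c \<le> a}" "T = I_pts - {c \<in> I_pts. c \<le> b}" by blast
  have "S \<inter> T = I_pts - {c \<in> I_pts. c \<le> sup a b}"
    unfolding ab I_pts_def using le_supI1 le_supI2 by blast
  then show "\<exists>d. S \<inter> T = I_pts - {c \<in> I_pts. c \<le> d}" by blast
next
  fix K :: "'l set set"
  assume K: "\<forall>S\<in>K. \<exists>a. S = I_pts - {c \<in> I_pts. c \<le> a}"
  define A where "A = {a. I_pts - {c \<in> I_pts. c \<le> a} \<in> K}"
  have "\<Union>K = I_pts - {c \<in> I_pts. c \<le> Inf A}"
  proof
    show "\<Union>K \<subseteq> I_pts - {c \<in> I_pts. c \<le> Inf A}"
    proof
      fix x assume "x \<in> \<Union>K"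
      then obtain S where "S \<in> K" "x \<in> S" by blast
      with K obtain a where "S = I_pts - {c \<in> I_pts. c \<le> a}" by blast
      with \<open>S \<in> K\<close> \<open>x \<in> S\<close> show "x \<in> I_pts - {c \<in> I_pts. c \<le> Inf A}"
        unfolding A_def by (auto simp: le_Inf_iff)
    qed
    show "I_pts - {c \<in> I_pts. c \<le> Inf A} \<subseteq> \<Union>K"
      unfolding A_def by (auto simp: le_Inf_iff)
  qed
  then show "\<exists>d. \<Union>K = I_pts - {c \<in> I_pts. c \<le> d}" by blast
qed

lemma I_open: "openin (I_top::'l::complete_lattice topology) U \<longleftrightarrow> (\<exists>a. U = I_pts - {c \<in> I_pts. c \<le> a})"
  unfolding I_top_def topology_inverse'[OF I_istop] by (rule refl)

lemma I_space: "topspace (I_top::'l::complete_lattice topology) = I_pts"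
proof -
  have "I_pts = (I_pts::'l set) - {c \<in> I_pts. c \<le> bot}"
    unfolding I_pts_def by (auto simp: le_bot)
  then have "openin (I_top::'l topology) I_pts" using I_open by blast
  moreover have "\<And>U. openin (I_top::'l topology) U \<Longrightarrow> U \<subseteq> I_pts"
    using I_open by blast
  ultimately show ?thesis unfolding topspace_def by blast
qed

lemma Sigma_dual_pts: "(q::'l::complete_lattice dual) \<in> Sigma_pts \<longleftrightarrow> undual q \<in> I_pts"
proof -
  have e1: "(q = top) \<longleftrightarrow> (undual q = bot)"
    by (metis dual_bot_eq dual_undual undual_dual)
  have e2: "(\<forall>a b::'l dual. inf a b \<le> q \<longrightarrow> a \<le> q \<or> b \<le> q) \<longleftrightarrow>
            (\<forall>a b::'l. undual q \<le> sup a b \<longrightarrow> undual q \<le> a \<or> undual q \<le> b)"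
  proof
    assume H: "\<forall>a b::'l dual. inf a b \<le> q \<longrightarrow> a \<le> q \<or> b \<le> q"
    show "\<forall>a b::'l. undual q \<le> sup a b \<longrightarrow> undual q \<le> a \<or> undual q \<le> b"
    proof (intro allI impI)
      fix a b :: 'l assume "undual q \<le> sup a b"
      then have "inf (dual a) (dual b) \<le> q" by (simp add: dual_less_eq_iff)
      then have "dual a \<le> q \<or> dual b \<le> q" using H by blast
      then show "undual q \<le> a \<or> undual q \<le> b" by (simp add: dual_less_eq_iff)
    qed
  next
    assume H: "\<forall>a b::'l. undual q \<le> sup a b \<longrightarrow> undual q \<le> a \<or> undual q \<le> b"
    show "\<forall>a b::'l dual. inf a b \<le> q \<longrightarrow> a \<le> q \<or> b \<le> q"
    proof (intro allI impI)
      fix a b :: "'l dual" assume "inf a b \<le> q"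
      then have "undual q \<le> sup (undual a) (undual b)" by (simp add: dual_less_eq_iff)
      then have "undual q \<le> undual a \<or> undual q \<le> undual b" using H by blast
      then show "a \<le> q \<or> b \<le> q" by (simp add: dual_less_eq_iff)
    qed
  qed
  show ?thesis unfolding Sigma_pts_def I_pts_def mem_Collect_eq e1 e2 ..
qed

lemma Sigma_dual_pts': "dual (x::'l::complete_lattice) \<in> Sigma_pts \<longleftrightarrow> x \<in> I_pts"
  using Sigma_dual_pts[of "dual x"] by simp

lemma I_dual_pts: "dual (x::'m::complete_lattice) \<in> I_pts \<longleftrightarrow> x \<in> Sigma_pts"
proof -
  have e1: "(dual x = bot) \<longleftrightarrow> (x = top)"
    by (metis dual_top_eq undual_dual)
  have e2: "(\<forall>a b::'m dual. dual x \<le> sup a b \<longrightarrow> dual x \<le> a \<or> dual x \<le> b) \<longleftrightarrow>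
            (\<forall>a b::'m. inf a b \<le> x \<longrightarrow> a \<le> x \<or> b \<le> x)"
  proof
    assume H: "\<forall>a b::'m dual. dual x \<le> sup a b \<longrightarrow> dual x \<le> a \<or> dual x \<le> b"
    show "\<forall>a b::'m. inf a b \<le> x \<longrightarrow> a \<le> x \<or> b \<le> x"
    proof (intro allI impI)
      fix a b :: 'm assume "inf a b \<le> x"
      then have "dual x \<le> sup (dual a) (dual b)" by (simp add: dual_less_eq_iff)
      then have "dual x \<le> dual a \<or> dual x \<le> dual b" using H by blast
      then show "a \<le> x \<or> b \<le> x" by simp
    qed
  next
    assume H: "\<forall>a b::'m. inf a b \<le> x \<longrightarrow> a \<le> x \<or> b \<le> x"
    show "\<forall>a b::'m dual. dual x \<le> sup a b \<longrightarrow> dual x \<le> a \<or> dual x \<le> b"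
    proof (intro allI impI)
      fix a b :: "'m dual" assume "dual x \<le> sup a b"
      then have "inf (undual a) (undual b) \<le> x" by (simp add: dual_less_eq_iff)
      then have "undual a \<le> x \<or> undual b \<le> x" using H by blast
      then show "dual x \<le> a \<or> dual x \<le> b" by (simp add: dual_less_eq_iff)
    qed
  qed
  show ?thesis unfolding Sigma_pts_def I_pts_def mem_Collect_eq e1 e2 ..
qed

lemma I_dual_pts': "undual (y::'m::complete_lattice dual) \<in> Sigma_pts \<longleftrightarrow> y \<in> I_pts"
  using I_dual_pts[of "undual y"] by simp

lemma part3: "homeomorphic_map (Sigma_top :: 'l::complete_lattice dual topology) (I_top :: 'l topology) undual"
proof -
  have "homeomorphic_maps (Sigma_top :: 'l dual topology) (I_top :: 'l topology) undual dual"
    unfolding homeomorphic_maps_def continuous_map Sigma_space I_space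
  proof (intro conjI allI impI ballI)
    show "undual ` (Sigma_pts::'l dual set) \<subseteq> I_pts" using Sigma_dual_pts by blast
    show "dual ` (I_pts::'l set) \<subseteq> Sigma_pts" using Sigma_dual_pts' by blast
    fix U :: "'l set" assume "openin I_top U"
    then obtain a where a: "U = I_pts - {c \<in> I_pts. c \<le> a}" using I_open by blast
    have "{x \<in> Sigma_pts. undual x \<in> U} = {x \<in> Sigma_pts. \<not> dual a \<le> x}"
      unfolding a using Sigma_dual_pts Sigma_dual_pts' by (auto simp: dual_less_eq_iff)
    then show "openin Sigma_top {x \<in> Sigma_pts. undual x \<in> U}" using Sigma_open by metis
  next
    fix U :: "'l dual set" assume "openin Sigma_top U"
    then obtain a where a: "U = {p \<in> Sigma_pts. \<not> a \<le> p}" using Sigma_open by blast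
    have "{y \<in> I_pts. dual y \<in> U} = I_pts - {c \<in> I_pts. c \<le> undual a}"
      unfolding a using Sigma_dual_pts Sigma_dual_pts' by (auto simp: dual_less_eq_iff)
    then show "openin I_top {y \<in> I_pts. dual y \<in> U}" using I_open by metis
  qed auto
  then show ?thesis using homeomorphic_map_maps by blast
qed

lemma part4: "homeomorphic_map (Sigma_top :: 'm::complete_lattice topology) (I_top :: 'm dual topology) dual"
proof -
  have "homeomorphic_maps (Sigma_top :: 'm topology) (I_top :: 'm dual topology) dual undual"
    unfolding homeomorphic_maps_def continuous_map Sigma_space I_space
  proof (intro conjI allI impI ballI)
    show "dual ` (Sigma_pts::'m set) \<subseteq> I_pts" using I_dual_pts by blast
    show "undual ` (I_pts::'m dual set) \<subseteq> Sigma_pts" using I_dual_pts' by blast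
    fix U :: "'m dual set" assume "openin I_top U"
    then obtain a where a: "U = I_pts - {c \<in> I_pts. c \<le> a}" using I_open by blast
    have "{x \<in> Sigma_pts. dual x \<in> U} = {x \<in> Sigma_pts. \<not> undual a \<le> x}"
      unfolding a using I_dual_pts I_dual_pts' by (auto simp: dual_less_eq_iff)
    then show "openin Sigma_top {x \<in> Sigma_pts. dual x \<in> U}" using Sigma_open by metis
  next
    fix U :: "'m set" assume "openin Sigma_top U"
    then obtain a where a: "U = {p \<in> Sigma_pts. \<not> a \<le> p}" using Sigma_open by blast
    have "{y \<in> I_pts. undual y \<in> U} = I_pts - {c \<in> I_pts. c \<le> dual a}"
      unfolding a using I_dual_pts I_dual_pts' by (auto simp: dual_less_eq_iff)
    then show "openin I_top {y \<in> I_pts. undual y \<in> U}" using I_open by metis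
  qed auto
  then show ?thesis using homeomorphic_map_maps by blast
qed


lemma part1_eq:
  assumes dp: "dual_pair sa sb p" and q: "qvb p X \<kappa>" and cs: "cospectral p X \<kappa>"
    and U: "openin X U"
  shows "restr sb X (F_of p \<circ> \<kappa>) U = F_of p (corestr sa p X \<kappa> (topspace X - U))"
proof -
  have op: "openin X {x \<in> topspace X. \<phi> \<notin> (F_of p \<circ> \<kappa>) x}" for \<phi>
  proof -
    have "G_of p {\<phi>} \<in> Max_of p" unfolding Max_of_def by blast
    then have "closedin X {x \<in> topspace X. \<kappa> x \<subseteq> G_of p {\<phi>}}" using cs unfolding cospectral_def by blast
    moreover have "{x \<in> topspace X. \<phi> \<notin> (F_of p \<circ> \<kappa>) x} = topspace X - {x \<in> topspace X. \<kappa> x \<subseteq> G_of p {\<phi>}}"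
      unfolding F_of_def G_of_def by auto
    ultimately show ?thesis by (simp add: openin_diff)
  qed
  have "restr sb X (F_of p \<circ> \<kappa>) U = module.span sb {\<phi>. {x \<in> topspace X. \<phi> \<notin> (F_of p \<circ> \<kappa>) x} \<subseteq> U}"
    unfolding restr_def interior_of_openin[OF op] ..
  also have "{\<phi>. {x \<in> topspace X. \<phi> \<notin> (F_of p \<circ> \<kappa>) x} \<subseteq> U} = F_of p (\<Union> (\<kappa> ` (topspace X - U)))"
    unfolding F_of_def by auto
  also have "module.span sb \<dots> = F_of p (\<Union> (\<kappa> ` (topspace X - U)))" using span_F[OF dp] .
  also have "\<dots> = F_of p (corestr sa p X \<kappa> (topspace X - U))"
    unfolding corestr_def join_of_def FGF F_span[OF dp] ..
  finally show ?thesis .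
qed

lemma part2_eq:
  assumes dp: "dual_pair sa sb p" and q: "qvb p X \<kappa>" and sp: "spectral X \<kappa>"
    and C: "closedin X C"
  shows "corestr sb (tr p) X (F_of p \<circ> \<kappa>) C = F_of p (restr sa X \<kappa> (topspace X - C))"
proof -
  have CX: "C \<subseteq> topspace X" using C closedin_subset by blast
  have k: "G_of p (F_of p (\<kappa> x)) = \<kappa> x" if "x \<in> C" for x
  proof -
    have "\<kappa> x \<in> Max_of p" using q CX that unfolding qvb_def by blast
    then obtain W where "\<kappa> x = G_of p W" unfolding Max_of_def by blast
    then show ?thesis using GFG by metis
  qed
  have "G_of p (\<Union> ((F_of p \<circ> \<kappa>) ` C)) = (\<Inter>x\<in>C. G_of p (F_of p (\<kappa> x)))"
    unfolding G_of_def by auto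
  also have "\<dots> = \<Inter> (\<kappa> ` C)" using k by simp
  finally have g: "G_of p (\<Union> ((F_of p \<circ> \<kappa>) ` C)) = \<Inter> (\<kappa> ` C)" .
  have lhs: "corestr sb (tr p) X (F_of p \<circ> \<kappa>) C = F_of p (\<Inter> (\<kappa> ` C))"
    unfolding corestr_def join_of_def F_tr G_tr G_span[OF dp] g ..
  have "restr sa X \<kappa> (topspace X - C) = module.span sa {a. {x \<in> topspace X. a \<notin> \<kappa> x} \<subseteq> topspace X - C}"
  proof -
    have io: "X interior_of {x \<in> topspace X. a \<notin> \<kappa> x} = {x \<in> topspace X. a \<notin> \<kappa> x}" for a
      using sp unfolding spectral_def by (intro interior_of_openin) (erule allE)
    show ?thesis unfolding restr_def io ..
  qed
  also have "{a. {x \<in> topspace X. a \<notin> \<kappa> x} \<subseteq> topspace X - C} = \<Inter> (\<kappa> ` C)"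
    using CX by auto
  finally have "F_of p (restr sa X \<kappa> (topspace X - C)) = F_of p (\<Inter> (\<kappa> ` C))"
    using F_span[OF dp] by simp
  then show ?thesis using lhs by simp
qed

lemma id_iso1:
  assumes "\<And>U. openin X U \<Longrightarrow> g1 U = g2 (topspace X - U)"
  shows "id_iso {U. openin X U} (\<subseteq>) {C. closedin X C} (\<supseteq>) g1 g2 (\<lambda>U. topspace X - U)"
  unfolding id_iso_def
proof (intro conjI ballI)
  show "bij_betw (\<lambda>U. topspace X - U) {U. openin X U} {C. closedin X C}"
    by (rule bij_betw_byWitness[where f'="\<lambda>U. topspace X - U"])
       (auto dest: openin_subset closedin_subset simp: closedin_def)
next
  fix x y assume "x \<in> {U. openin X U}" "y \<in> {U. openin X U}"
  then show "x \<subseteq> y \<longleftrightarrow> topspace X - x \<supseteq> topspace X - y"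
    by (auto dest: openin_subset)
next
  fix x assume "x \<in> {U. openin X U}" then show "g1 x = g2 (topspace X - x)" using assms by simp
qed

lemma id_iso2:
  assumes "\<And>U. openin X U \<Longrightarrow> g1 U = g2 (topspace X - U)"
  shows "id_iso {U. openin X U} (\<supseteq>) {C. closedin X C} (\<subseteq>) g1 g2 (\<lambda>U. topspace X - U)"
  unfolding id_iso_def
proof (intro conjI ballI)
  show "bij_betw (\<lambda>U. topspace X - U) {U. openin X U} {C. closedin X C}"
    by (rule bij_betw_byWitness[where f'="\<lambda>U. topspace X - U"])
       (auto dest: openin_subset closedin_subset simp: closedin_def)
next
  fix x y assume "x \<in> {U. openin X U}" "y \<in> {U. openin X U}"
  then show "x \<supseteq> y \<longleftrightarrow> topspace X - x \<subseteq> topspace X - y"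
    by (auto dest: openin_subset)
next
  fix x assume "x \<in> {U. openin X U}" then show "g1 x = g2 (topspace X - x)" using assms by simp
qed

theorem lemma6p9:
  fixes sa :: "complex \<Rightarrow> 'a::ab_group_add \<Rightarrow> 'a"
    and sb :: "complex \<Rightarrow> 'b::ab_group_add \<Rightarrow> 'b"
    and p :: "'a \<Rightarrow> 'b \<Rightarrow> complex"
  assumes "dual_pair sa sb p"
  shows
  "(\<forall>(X :: 'x topology) (\<kappa> :: 'x \<Rightarrow> 'a set). qvb p X \<kappa> \<and> cospectral p X \<kappa> \<longrightarrow>
      (\<forall>U. openin X U \<longrightarrow>
         restr sb X (F_of p \<circ> \<kappa>) U = F_of p (corestr sa p X \<kappa> (topspace X - U))) \<and>
      id_iso {U. openin X U} (\<subseteq>) {C. closedin X C} (\<supseteq>)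
        (restr sb X (F_of p \<circ> \<kappa>)) (\<lambda>C. F_of p (corestr sa p X \<kappa> C)) (\<lambda>U. topspace X - U))
   \<and>
   (\<forall>(X :: 'x topology) (\<kappa> :: 'x \<Rightarrow> 'a set). qvb p X \<kappa> \<and> spectral X \<kappa> \<longrightarrow>
      (\<forall>C. closedin X C \<longrightarrow>
         corestr sb (tr p) X (F_of p \<circ> \<kappa>) C = F_of p (restr sa X \<kappa> (topspace X - C))) \<and>
      id_iso {U. openin X U} (\<supseteq>) {C. closedin X C} (\<subseteq>)
        (\<lambda>U. F_of p (restr sa X \<kappa> U)) (corestr sb (tr p) X (F_of p \<circ> \<kappa>)) (\<lambda>U. topspace X - U))
   \<and>
   (\<forall>\<gamma>c :: 'l::complete_lattice \<Rightarrow> 'a set.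
      colocale_law TYPE('l) \<and> (\<forall>c. \<gamma>c c \<in> Max_of p) \<and>
      (\<forall>S. \<gamma>c (Sup S) = join_of sa p (\<gamma>c ` S)) \<longrightarrow>
      (\<exists>h :: 'l dual \<Rightarrow> 'l.
         homeomorphic_map (Sigma_top :: 'l dual topology) (I_top :: 'l topology) h \<and>
         (\<forall>q \<in> topspace (Sigma_top :: 'l dual topology).
            F_of p (\<gamma>c (h q)) = F_of p (\<gamma>c (undual q)))))
   \<and>
   (\<forall>\<gamma> :: 'm::complete_lattice \<Rightarrow> 'a set.
      frame_law TYPE('m) \<and> (\<forall>c. \<gamma> c \<in> Max_of p) \<and>
      (\<forall>S. \<gamma> (Inf S) = \<Inter> (\<gamma> ` S)) \<longrightarrow>
      (\<exists>h :: 'm \<Rightarrow> 'm dual.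
         homeomorphic_map (Sigma_top :: 'm topology) (I_top :: 'm dual topology) h \<and>
         (\<forall>q \<in> topspace (Sigma_top :: 'm topology).
            F_of p (\<gamma> (undual (h q))) = F_of p (\<gamma> q))))"
proof -
  have dp: "dual_pair sa sb p" by fact
  show ?thesis
  proof (intro conjI)
    show "\<forall>(X :: 'x topology) (\<kappa> :: 'x \<Rightarrow> 'a set). qvb p X \<kappa> \<and> cospectral p X \<kappa> \<longrightarrow>
      (\<forall>U. openin X U \<longrightarrow>
         restr sb X (F_of p \<circ> \<kappa>) U = F_of p (corestr sa p X \<kappa> (topspace X - U))) \<and>
      id_iso {U. openin X U} (\<subseteq>) {C. closedin X C} (\<supseteq>)
        (restr sb X (F_of p \<circ> \<kappa>)) (\<lambda>C. F_of p (corestr sa p X \<kappa> C)) (\<lambda>U. topspace X - U)"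
    proof (intro allI impI, intro conjI)
      fix X :: "'x topology" and \<kappa> :: "'x \<Rightarrow> 'a set"
      assume h: "qvb p X \<kappa> \<and> cospectral p X \<kappa>"
      then show "\<forall>U. openin X U \<longrightarrow> restr sb X (F_of p \<circ> \<kappa>) U = F_of p (corestr sa p X \<kappa> (topspace X - U))"
        using part1_eq[OF dp] by blast
      show "id_iso {U. openin X U} (\<subseteq>) {C. closedin X C} (\<supseteq>)
          (restr sb X (F_of p \<circ> \<kappa>)) (\<lambda>C. F_of p (corestr sa p X \<kappa> C)) (\<lambda>U. topspace X - U)"
        by (rule id_iso1) (use h part1_eq[OF dp] in blast)
    qed
  next
    show "\<forall>(X :: 'x topology) (\<kappa> :: 'x \<Rightarrow> 'a set). qvb p X \<kappa> \<and> spectral X \<kappa> \<longrightarrow>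
      (\<forall>C. closedin X C \<longrightarrow>
         corestr sb (tr p) X (F_of p \<circ> \<kappa>) C = F_of p (restr sa X \<kappa> (topspace X - C))) \<and>
      id_iso {U. openin X U} (\<supseteq>) {C. closedin X C} (\<subseteq>)
        (\<lambda>U. F_of p (restr sa X \<kappa> U)) (corestr sb (tr p) X (F_of p \<circ> \<kappa>)) (\<lambda>U. topspace X - U)"
    proof (intro allI impI, intro conjI)
      fix X :: "'x topology" and \<kappa> :: "'x \<Rightarrow> 'a set"
      assume h: "qvb p X \<kappa> \<and> spectral X \<kappa>"
      then show "\<forall>C. closedin X C \<longrightarrow> corestr sb (tr p) X (F_of p \<circ> \<kappa>) C = F_of p (restr sa X \<kappa> (topspace X - C))"
        using part2_eq[OF dp] by blast
      show "id_iso {U. openin X U} (\<supseteq>) {C. closedin X C} (\<subseteq>)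
          (\<lambda>U. F_of p (restr sa X \<kappa> U)) (corestr sb (tr p) X (F_of p \<circ> \<kappa>)) (\<lambda>U. topspace X - U)"
      proof (rule id_iso2)
        fix U assume U: "openin X U"
        then have c: "closedin X (topspace X - U)" by (simp add: closedin_diff)
        have e: "topspace X - (topspace X - U) = U" using U openin_subset by blast
        have "corestr sb (tr p) X (F_of p \<circ> \<kappa>) (topspace X - U) = F_of p (restr sa X \<kappa> (topspace X - (topspace X - U)))"
          using part2_eq[OF dp _ _ c] h by blast
        then show "F_of p (restr sa X \<kappa> U) = corestr sb (tr p) X (F_of p \<circ> \<kappa>) (topspace X - U)"
          unfolding e by (rule sym)
      qed
    qed
  next
    show "\<forall>\<gamma>c :: 'l::complete_lattice \<Rightarrow> 'a set.
      colocale_law TYPE('l) \<and> (\<forall>c. \<gamma>c c \<in> Max_of p) \<and>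
      (\<forall>S. \<gamma>c (Sup S) = join_of sa p (\<gamma>c ` S)) \<longrightarrow>
      (\<exists>h :: 'l dual \<Rightarrow> 'l.
         homeomorphic_map (Sigma_top :: 'l dual topology) (I_top :: 'l topology) h \<and>
         (\<forall>q \<in> topspace (Sigma_top :: 'l dual topology).
            F_of p (\<gamma>c (h q)) = F_of p (\<gamma>c (undual q))))"
      using part3 by blast
  next
    show "\<forall>\<gamma> :: 'm::complete_lattice \<Rightarrow> 'a set.
      frame_law TYPE('m) \<and> (\<forall>c. \<gamma> c \<in> Max_of p) \<and>
      (\<forall>S. \<gamma> (Inf S) = \<Inter> (\<gamma> ` S)) \<longrightarrow>
      (\<exists>h :: 'm \<Rightarrow> 'm dual.
         homeomorphic_map (Sigma_top :: 'm topology) (I_top :: 'm dual topology) h \<and>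
         (\<forall>q \<in> topspace (Sigma_top :: 'm topology).
            F_of p (\<gamma> (undual (h q))) = F_of p (\<gamma> q)))"
    proof (intro allI impI)
      fix \<gamma> :: "'m::complete_lattice \<Rightarrow> 'a set"
      show "\<exists>h :: 'm \<Rightarrow> 'm dual.
         homeomorphic_map (Sigma_top :: 'm topology) (I_top :: 'm dual topology) h \<and>
         (\<forall>q \<in> topspace (Sigma_top :: 'm topology).
            F_of p (\<gamma> (undual (h q))) = F_of p (\<gamma> q))"
        using part4 by (intro exI[of _ dual]) simp
    qed
  qed
qed

end
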